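(* Let $G$ be a graph on $d+2$ vertices, $k>1$, and $\overline{B_G} = \frac{1}{k^2-1}(B_G(k) + J) = \frac{1}{k^2-1} I - A_G$. Then $G$ has a spherical representation in $\mathbb{R}^d$ with distance ratio $k$ if and only if all of the following hold: (i) $w^T \overline{B_G} w \geq 0$ for all $w \in \mathbf{1}^{\perp}$; (ii) there exist a nonzero $w \in \mathbf{1}^{\perp}$ and a real $\gamma$ with $\overline{B_G} w = \gamma \mathbf{1}$; (iii) $\det(\overline{B_G}) = 0$; (iv) there exists $r_0 \in \mathbb{R}$ such that $rJ + \overline{B_G}$ is positive semidefinite for all $r \geq r_0$.
   Context: Graphs are finite and simple with vertices labeled $1,\dots,d+2$; $A_G$ is the adjacency matrix. A finite set $S\subset\mathbb{R}^d$ is a 2-distance set if $\{\|p-q\| : p,q\in S, p\neq q\}$ has exactly two elements $\alpha_1>\alpha_2$; its distance ratio is $k=\alpha_1/\alpha_2$; its associated graph has vertex set $S$ with $p,q$ adjacent iff $\|p-q\|=\alpha_1$. $G$ has a spherical representation in $\mathbb{R}^d$ with ratio $k$ if some 2-distance set in $\mathbb{R}^d$ with ratio $k$, lying on a $(d-1)$-dimensional sphere, has associated graph $G$. $B_G(k)$ is the matrix with $b_{ii}=0$, $b_{ij}=-1$ for non-adjacent $i\neq j$, $b_{ij}=-k^2$ for adjacent $i,j$. $J$ is the all-ones matrix, $\mathbf{1}$ the all-ones vector, $\mathbf{1}^\perp$ its orthogonal complement. *)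

theory Defs
  imports "HOL-Analysis.Analysis"
begin

definition simple_graph :: "('v \<Rightarrow> 'v \<Rightarrow> bool) \<Rightarrow> bool" where
  "simple_graph E \<longleftrightarrow> (\<forall>x y. E x y \<longleftrightarrow> E y x) \<and> (\<forall>x. \<not> E x x)"

definition adj_matrix :: "('v::finite \<Rightarrow> 'v \<Rightarrow> bool) \<Rightarrow> real^'v^'v" where
  "adj_matrix E = (\<chi> i j. if E i j then 1 else 0)"

definition J_mat :: "real^'v::finite^'v" where
  "J_mat = (\<chi> i j. 1)"

definition B_mat :: "('v::finite \<Rightarrow> 'v \<Rightarrow> bool) \<Rightarrow> real \<Rightarrow> real^'v^'v" where
  "B_mat E k = (\<chi> i j. if i = j then 0 else if E i j then - (k^2) else -1)"

definition Bbar_mat :: "('v::finite \<Rightarrow> 'v \<Rightarrow> bool) \<Rightarrow> real \<Rightarrow> real^'v^'v" where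
  "Bbar_mat E k = (1 / (k^2 - 1)) *\<^sub>R (B_mat E k + J_mat)"

definition psd :: "real^'v::finite^'v \<Rightarrow> bool" where
  "psd M \<longleftrightarrow> transpose M = M \<and> (\<forall>x. 0 \<le> x \<bullet> (M *v x))"

definition spherical_representation ::
  "('v \<Rightarrow> 'v \<Rightarrow> bool) \<Rightarrow> real \<Rightarrow> ('v \<Rightarrow> real^'n::finite) \<Rightarrow> bool" where
  "spherical_representation E k p \<longleftrightarrow>
     inj p \<and>
     (\<exists>a1 a2. {dist (p x) (p y) | x y. x \<noteq> y} = {a1, a2} \<and> a1 > a2 \<and> a1 / a2 = k \<and>
        (\<forall>x y. x \<noteq> y \<longrightarrow> (E x y \<longleftrightarrow> dist (p x) (p y) = a1))) \<and>
     (\<exists>c r. r > 0 \<and> (\<forall>x. dist (p x) c = r))"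

end

theory Submission
  imports Defs
begin


lemma inner_mat_vec: "(x::real^'n::finite) \<bullet> (A *v x) = (\<Sum>i\<in>UNIV. \<Sum>j\<in>UNIV. x$i * A$i$j * x$j)"
  by (simp add: inner_vec_def matrix_vector_mult_def sum_distrib_left mult.assoc)

lemma gram_quad:
  fixes q :: "'v::finite \<Rightarrow> real^'m::finite" and M :: "real^'v^'v"
  assumes "\<And>i j. M$i$j = q i \<bullet> q j"
  shows "x \<bullet> (M *v x) = (norm (\<Sum>i\<in>UNIV. x$i *\<^sub>R q i))^2"
proof -
  have "(norm (\<Sum>i\<in>UNIV. x$i *\<^sub>R q i))^2 = (\<Sum>i\<in>UNIV. x$i *\<^sub>R q i) \<bullet> (\<Sum>j\<in>UNIV. x$j *\<^sub>R q j)"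
    by (simp add: power2_norm_eq_inner)
  also have "\<dots> = (\<Sum>j\<in>UNIV. \<Sum>i\<in>UNIV. x$i * (q i \<bullet> q j) * x$j)"
    unfolding inner_sum_left inner_sum_right by (simp add: algebra_simps)
  also have "\<dots> = (\<Sum>i\<in>UNIV. \<Sum>j\<in>UNIV. x$i * (q i \<bullet> q j) * x$j)"
    by (rule sum.swap)
  finally show ?thesis by (simp add: inner_mat_vec assms)
qed

lemma J_mult: "J_mat *v x = (x \<bullet> vec 1) *\<^sub>R (vec 1 :: real^'v::finite)"
  by (simp add: vec_eq_iff J_mat_def matrix_vector_mult_def inner_vec_def)

lemma sym_inner: "transpose G = G \<Longrightarrow> x \<bullet> ((G::real^'n::finite^'n) *v y) = (G *v x) \<bullet> y"
  by (metis dot_lmul_matrix inner_commute transpose_transpose vector_transpose_matrix)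

lemma axis_quad: "axis a 1 \<bullet> ((G::real^'n::finite^'n) *v axis b 1) = G$a$b"
  by (simp add: inner_axis' matrix_vector_mul_component inner_axis)

lemma lin_nonneg: assumes "\<And>t::real. 0 \<le> t * c + d" shows "c = 0"
proof (rule ccontr)
  assume "c \<noteq> 0"
  have "0 \<le> (-(\<bar>d\<bar>+1)/c) * c + d" by (rule assms)
  also have "\<dots> = -(\<bar>d\<bar>+1) + d" using \<open>c \<noteq> 0\<close> by simp
  finally show False by linarith
qed

lemma psd_zero:
  fixes M :: "real^'n::finite^'n"
  assumes "transpose M = M" "\<And>x. 0 \<le> x \<bullet> (M *v x)" "x \<bullet> (M *v x) = 0"
  shows "M *v x = 0"
proof -
  define y where "y = M *v x"
  have "0 \<le> (x - t *\<^sub>R y) \<bullet> (M *v (x - t *\<^sub>R y))" for t by (rule assms(2))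
  moreover have "(x - t *\<^sub>R y) \<bullet> (M *v (x - t *\<^sub>R y)) = -2 * t * (y \<bullet> y) + t*t * (y \<bullet> (M *v y))" for t
    using assms(3) sym_inner[OF assms(1), of y x]
    by (simp add: matrix_vector_mult_diff_distrib inner_diff_left inner_diff_right y_def algebra_simps inner_commute)
  ultimately have h: "0 \<le> -2 * t * (y \<bullet> y) + t*t * (y \<bullet> (M *v y))" for t by metis
  define a where "a = y \<bullet> y"
  define b where "b = y \<bullet> (M *v y)"
  have b0: "0 \<le> b" using assms(2) b_def by simp
  have "a = 0"
  proof (rule ccontr)
    assume "a \<noteq> 0"
    then have ap: "a > 0" using a_def by (simp add: order_le_neq_trans)
    define t where "t = a/(b+1)"
    have tp: "t > 0" using ap b0 t_def by simp
    have "t * b < a" using ap b0 unfolding t_def by (simp add: field_simps)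
    then have "-2 * a + t * b < 0" using ap by linarith
    then have "t * (-2 * a + t * b) < 0" using tp by (simp add: mult_pos_neg)
    moreover have "0 \<le> -2 * t * a + t*t * b" using h a_def b_def by blast
    ultimately show False by (simp add: algebra_simps)
  qed
  then show ?thesis using a_def y_def by simp
qed



lemma mv_axis: "((G::real^'n::finite^'m) *v axis b 1)$a = G$a$b"
  by (simp add: matrix_vector_mult_basis column_def)

lemma quad_expand:
  fixes G :: "real^'n::finite^'n"
  assumes "transpose G = G"
  shows "(x + t *\<^sub>R axis a 1) \<bullet> (G *v (x + t *\<^sub>R axis a 1)) =
     x \<bullet> (G *v x) + 2 * t * (G *v x)$a + t * t * G$a$a"
proof -
  have "x \<bullet> (G *v axis a 1) = (G *v x) \<bullet> axis a 1" by (rule sym_inner[OF assms])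
  then have e: "x \<bullet> (G *v axis a 1) = (G *v x)$a" by (simp add: inner_axis)
  show ?thesis
    by (simp add: matrix_vector_right_distrib matrix_vector_mult_scaleR inner_add_left inner_add_right
        e axis_quad inner_axis' mv_axis algebra_simps)
qed

lemma sym_entry: "transpose G = G \<Longrightarrow> G$i$j = G$j$i"
  by (metis transpose_def vec_lambda_beta)

lemma chol_aux:
  fixes I :: "'v::finite set"
  shows "\<forall>G::real^'v^'v. transpose G = G \<and> (\<forall>x. (\<forall>i. i \<notin> I \<longrightarrow> x$i = 0) \<longrightarrow> 0 \<le> x \<bullet> (G *v x)) \<longrightarrow>
     (\<exists>q::'v \<Rightarrow> real^'v. (\<forall>i\<in>I. \<forall>j\<in>I. q i \<bullet> q j = G$i$j) \<and> (\<forall>i\<in>I. \<forall>j. j \<notin> I \<longrightarrow> q i $ j = 0))"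
proof (induction I rule: finite_induct[OF finite])
  case 1
  then show ?case by (intro allI impI exI[of _ "\<lambda>_. 0"]) simp
next
  case (2 a F)
  show ?case
  proof (intro allI impI)
    fix G :: "real^'v^'v"
    assume H: "transpose G = G \<and> (\<forall>x. (\<forall>i. i \<notin> insert a F \<longrightarrow> x$i = 0) \<longrightarrow> 0 \<le> x \<bullet> (G *v x))"
    then have sym: "transpose G = G" and psd: "\<And>x. (\<forall>i. i \<notin> insert a F \<longrightarrow> x$i = 0) \<Longrightarrow> 0 \<le> x \<bullet> (G *v x)"
      by auto
    have symE: "G$i$j = G$j$i" for i j using sym_entry[OF sym] .
    define g where "g = G$a$a"
    have "0 \<le> axis a 1 \<bullet> (G *v axis a 1)" by (rule psd) (simp add: axis_def)
    then have g0: "0 \<le> g" by (simp add: axis_quad g_def)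
    show "\<exists>q::'v \<Rightarrow> real^'v. (\<forall>i\<in>insert a F. \<forall>j\<in>insert a F. q i \<bullet> q j = G$i$j) \<and>
           (\<forall>i\<in>insert a F. \<forall>j. j \<notin> insert a F \<longrightarrow> q i $ j = 0)"
    proof (cases "g = 0")
      case True
      have Gaj: "G$a$j = 0" if "j \<in> F" for j
      proof -
        have "a \<noteq> j" using that 2(2) by auto
        have "0 \<le> t * (2 * G$a$j) + G$j$j" for t
        proof -
          have "0 \<le> (axis j 1 + t *\<^sub>R axis a 1) \<bullet> (G *v (axis j 1 + t *\<^sub>R axis a 1))"
            by (rule psd) (use that in \<open>simp add: axis_def\<close>)
          also have "\<dots> = t * (2 * G$a$j) + G$j$j"
            using True by (simp add: quad_expand[OF sym] axis_quad g_def matrix_vector_mul_component inner_axis symE[of j a])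
          finally show ?thesis .
        qed
        then have "2 * G$a$j = 0" by (rule lin_nonneg)
        then show ?thesis by simp
      qed
      have "\<forall>x. (\<forall>i. i \<notin> F \<longrightarrow> x$i = 0) \<longrightarrow> 0 \<le> x \<bullet> (G *v x)"
        using psd by auto
      then obtain q :: "'v \<Rightarrow> real^'v" where q1: "\<forall>i\<in>F. \<forall>j\<in>F. q i \<bullet> q j = G$i$j" and q2: "\<forall>i\<in>F. \<forall>j. j \<notin> F \<longrightarrow> q i $ j = 0"
        using 2(3) sym by blast
      show ?thesis
        apply (rule exI[of _ "q(a := 0)"])
        using q1 q2 Gaj True 2(2) symE unfolding g_def by auto
    next
      case False
      then have gp: "g > 0" using g0 by simp
      define G' :: "real^'v^'v" where "G' = (\<chi> i j. G$i$j - G$i$a * G$a$j / g)"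
      have symG': "transpose G' = G'"
        unfolding G'_def transpose_def by (simp add: vec_eq_iff symE mult.commute)
      have psdG': "0 \<le> x \<bullet> (G' *v x)" if xs: "\<forall>i. i \<notin> F \<longrightarrow> x$i = 0" for x
      proof -
        define \<sigma> where "\<sigma> = (G *v x)$a"
        define t where "t = - \<sigma> / g"
        have "0 \<le> (x + t *\<^sub>R axis a 1) \<bullet> (G *v (x + t *\<^sub>R axis a 1))"
          by (rule psd) (use xs in \<open>auto simp: axis_def\<close>)
        also have "\<dots> = x \<bullet> (G *v x) - \<sigma> * \<sigma> / g"
          unfolding quad_expand[OF sym] using gp by (simp add: t_def g_def \<sigma>_def field_simps)
        also have "\<dots> = x \<bullet> (G' *v x)"
        proof -
          have s1: "\<sigma> = (\<Sum>j\<in>UNIV. G$a$j * x$j)"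
            by (simp add: \<sigma>_def matrix_vector_mult_def)
          have s2: "\<sigma> = (\<Sum>i\<in>UNIV. x$i * G$i$a)"
            by (simp add: s1 symE[of _ a] mult.commute)
          have "x \<bullet> (G' *v x) = (\<Sum>i\<in>UNIV. \<Sum>j\<in>UNIV. x$i * G$i$j * x$j - (x$i * G$i$a) * (G$a$j * x$j) / g)"
            unfolding inner_mat_vec G'_def by (simp add: algebra_simps)
          also have "\<dots> = x \<bullet> (G *v x) - (\<Sum>i\<in>UNIV. \<Sum>j\<in>UNIV. (x$i * G$i$a) * (G$a$j * x$j)) / g"
            by (simp add: inner_mat_vec sum_subtractf sum_divide_distrib)
          also have "(\<Sum>i\<in>UNIV. \<Sum>j\<in>UNIV. (x$i * G$i$a) * (G$a$j * x$j)) = \<sigma> * \<sigma>"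
            by (simp add: s1 s2[symmetric] sum_product[symmetric])
          finally show ?thesis by simp
        qed
        finally show ?thesis .
      qed
      obtain q :: "'v \<Rightarrow> real^'v" where q1: "\<forall>i\<in>F. \<forall>j\<in>F. q i \<bullet> q j = G'$i$j" and q2: "\<forall>i\<in>F. \<forall>j. j \<notin> F \<longrightarrow> q i $ j = 0"
        using 2(3) symG' psdG' by blast
      have qa: "q i $ a = 0" if "i \<in> F" for i using q2 that 2(2) by blast
      define r where "r = (\<lambda>i. if i = a then sqrt g *\<^sub>R axis a (1::real) else q i + (G$i$a / sqrt g) *\<^sub>R axis a 1)"
      have sg: "sqrt g * sqrt g = g" using g0 by simp
      show ?thesis
      proof (rule exI[of _ r], intro conjI ballI allI impI)
        fix i j assume i: "i \<in> insert a F" and j: "j \<in> insert a F"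
        show "r i \<bullet> r j = G$i$j"
        proof (cases "i = a")
          case ia: True
          show ?thesis
          proof (cases "j = a")
            case True
            then show ?thesis using ia sg by (simp add: r_def inner_axis_axis g_def)
          next
            case False
            then have "j \<in> F" using j by auto
            then show ?thesis using ia False gp qa[of j] symE[of j a]
              by (simp add: r_def inner_add_right inner_axis inner_axis' inner_axis_axis field_simps)
          qed
        next
          case ina: False
          then have iF: "i \<in> F" using i by auto
          show ?thesis
          proof (cases "j = a")
            case True
            then show ?thesis using ina gp qa[OF iF] symE[of i a]
              by (simp add: r_def inner_add_left inner_axis inner_axis' inner_axis_axis field_simps)
          next
            case False
            then have jF: "j \<in> F" using j by auto
            have "r i \<bullet> r j = G'$i$j + G$i$a * G$j$a / (sqrt g * sqrt g)"
              using ina False qa[OF iF] qa[OF jF] q1 iF jF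
              by (simp add: r_def inner_add_left inner_add_right inner_axis inner_axis' inner_axis_axis)
            also have "\<dots> = G$i$j"
              using gp sg symE[of j a] by (simp add: G'_def)
            finally show ?thesis .
          qed
        qed
      next
        fix i j assume i: "i \<in> insert a F" and j: "j \<notin> insert a F"
        show "r i $ j = 0"
          using i j q2 by (auto simp: r_def axis_def)
      qed
    qed
  qed
qed

lemma cholesky:
  fixes G :: "real^'v::finite^'v"
  assumes "transpose G = G" "\<And>x. 0 \<le> x \<bullet> (G *v x)"
  obtains q :: "'v \<Rightarrow> real^'v" where "\<And>i j. q i \<bullet> q j = G$i$j"
proof -
  have "\<exists>q::'v \<Rightarrow> real^'v. \<forall>i j. q i \<bullet> q j = G$i$j" using chol_aux[of UNIV] assms by auto
  then show ?thesis using that by blast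
qed



lemma Bbar_entry:
  assumes "k > 1"
  shows "Bbar_mat E k $ i $ j = (if i = j then 1/(k^2-1) else if E i j then -1 else 0)"
proof -
  have "k^2 > 1" using assms by (simp add: one_less_power)
  then show ?thesis
    by (simp add: Bbar_mat_def B_mat_def J_mat_def field_simps)
qed

lemma Bbar_sym:
  assumes "simple_graph E"
  shows "transpose (Bbar_mat E k) = Bbar_mat E k"
proof -
  have e: "E i j \<longleftrightarrow> E j i" for i j using assms unfolding simple_graph_def by blast
  have "(B_mat E k) $ i $ j = (B_mat E k) $ j $ i" for i j
    unfolding B_mat_def using e[of i j] by auto
  then show ?thesis unfolding Bbar_mat_def transpose_def J_mat_def
    by (simp add: vec_eq_iff)
qed

lemma J_sym: "transpose (J_mat :: real^'v::finite^'v) = J_mat"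
  by (simp add: J_mat_def transpose_def vec_eq_iff)

lemma transpose_add_scale: "transpose (r *\<^sub>R A + B) = r *\<^sub>R transpose A + transpose (B :: real^'n::finite^'n)"
  by (simp add: transpose_def vec_eq_iff)

lemma vec1_inner: "x \<bullet> (vec 1 :: real^'v::finite) = (\<Sum>i\<in>UNIV. x$i)"
  by (simp add: inner_vec_def)

lemma one_inner: "x \<bullet> (1 :: real^'v::finite) = (\<Sum>i\<in>UNIV. x$i)"
  by (simp add: inner_vec_def)

lemma det_zero_if_ker:
  fixes A :: "real^'n::finite^'n"
  assumes "A *v w = 0" "w \<noteq> 0"
  shows "det A = 0"
proof -
  have "\<not> inj ((*v) A)" using assms by (metis inj_eq matrix_vector_mult_0_right)
  then show ?thesis using det_nz_iff_inj[OF matrix_vector_mul_linear[of A]] by simp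
qed

lemma card_option_UNIV: "CARD('n::finite option) = CARD('n) + 1"
proof -
  have "(UNIV :: 'n option set) = insert None (Some ` UNIV)" by (auto intro: option.exhaust)
  then show ?thesis by (simp add: card_image)
qed

lemma forward:
  fixes E :: "'v::finite \<Rightarrow> 'v \<Rightarrow> bool" and k :: real and p :: "'v \<Rightarrow> real^'n::finite"
  assumes G: "simple_graph E"
    and card: "CARD('v) = CARD('n) + 2"
    and k1: "k > 1"
    and sr: "spherical_representation E k p"
  shows "((\<forall>w :: real^'v. w \<bullet> vec 1 = 0 \<longrightarrow> 0 \<le> w \<bullet> (Bbar_mat E k *v w)) \<and>
      (\<exists>(w :: real^'v) \<gamma>. w \<noteq> 0 \<and> w \<bullet> vec 1 = 0 \<and> Bbar_mat E k *v w = \<gamma> *\<^sub>R vec 1) \<and>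
      det (Bbar_mat E k) = 0 \<and>
      (\<exists>r0. \<forall>r \<ge> r0. psd (r *\<^sub>R J_mat + Bbar_mat E k)))"
proof -
  obtain a1 a2 where set: "{dist (p x) (p y) | x y. x \<noteq> y} = {a1, a2}" and a12: "a1 > a2"
     and ak: "a1 / a2 = k" and Eiff: "\<And>x y. x \<noteq> y \<Longrightarrow> (E x y \<longleftrightarrow> dist (p x) (p y) = a1)"
    using sr unfolding spherical_representation_def by blast
  obtain c R where R: "R > 0" "\<And>x. dist (p x) c = R"
    using sr unfolding spherical_representation_def by blast
  have "a2 \<in> {dist (p x) (p y) | x y. x \<noteq> y}" using set by simp
  then have a2ge: "a2 \<ge> 0" by auto
  have a2ne: "a2 \<noteq> 0" using ak k1 by auto
  have a2p: "a2 > 0" using a2ge a2ne by simp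
  have a1k: "a1 = k * a2" using ak a2p by (simp add: field_simps)
  have k21: "k^2 - 1 > 0" using k1 by (simp add: one_less_power)
  have distv: "dist (p x) (p y) = (if E x y then k * a2 else a2)" if "x \<noteq> y" for x y
  proof -
    have "dist (p x) (p y) \<in> {a1, a2}" using set that by blast
    then show ?thesis using Eiff[OF that] a1k by auto
  qed
  define q where "q = (\<lambda>i. (1/a2) *\<^sub>R (p i - c))"
  define s where "s = (R/a2)^2"
  have nq: "(norm (q i))^2 = s" for i
    using R(2)[of i] a2p by (simp add: q_def s_def dist_norm power_divide)
  have nqd: "(norm (q i - q j))^2 = (if i = j then 0 else if E i j then k^2 else 1)" for i j
  proof -
    have "q i - q j = (1/a2) *\<^sub>R (p i - p j)" by (simp add: q_def algebra_simps)
    then have "norm (q i - q j) = dist (p i) (p j) / a2" using a2p by (simp add: dist_norm)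
    then have "norm (q i - q j) = (if i = j then 0 else if E i j then k else 1)"
      using distv[of i j] a2p by auto
    then show ?thesis by auto
  qed
  have gram: "q i \<bullet> q j = s - (if i = j then 0 else if E i j then k^2 else 1) / 2" for i j
  proof -
    have "(norm (q i - q j))^2 = (norm (q i))^2 + (norm (q j))^2 - 2 * (q i \<bullet> q j)"
      by (simp add: power2_norm_eq_inner inner_diff_left inner_diff_right inner_commute)
    then show ?thesis using nq[of i] nq[of j] nqd[of i j] by (simp add: field_simps)
  qed
  define \<kappa> where "\<kappa> = 2 / (k^2 - 1)"
  define rs where "rs = \<kappa> * (s - 1/2)"
  define Gm :: "real^'v^'v" where "Gm = (\<chi> i j. q i \<bullet> q j)"
  have Beq: "Bbar_mat E k = \<kappa> *\<^sub>R Gm - rs *\<^sub>R J_mat"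
  proof -
    have "Bbar_mat E k $ i $ j = \<kappa> * (q i \<bullet> q j) - rs" for i j
    proof -
      define d where "d = k^2 - 1"
      have ne: "d \<noteq> 0" using k21 d_def by simp
      have kd: "k^2 = d + 1" using d_def by simp
      show ?thesis unfolding Bbar_entry[OF k1] gram \<kappa>_def rs_def d_def[symmetric] kd using ne
        by (cases "i = j"; cases "E i j") (simp_all add: field_simps)
    qed
    then show ?thesis by (simp add: vec_eq_iff Gm_def J_mat_def)
  qed
  define L where "L = (\<lambda>x::real^'v. \<Sum>i\<in>UNIV. x$i *\<^sub>R q i)"
  have quadG: "x \<bullet> (Gm *v x) = (norm (L x))^2" for x
    unfolding L_def by (rule gram_quad) (simp add: Gm_def)
  have quadJ: "x \<bullet> (J_mat *v x) = (x \<bullet> vec 1)^2" for x :: "real^'v"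
    by (simp add: J_mult power2_eq_square)
  have quadB: "x \<bullet> (Bbar_mat E k *v x) = \<kappa> * (norm (L x))^2 - rs * (x \<bullet> vec 1)^2" for x
    by (simp add: Beq matrix_vector_mult_diff_rdistrib scaleR_matrix_vector_assoc[symmetric]
        inner_diff_right quadG quadJ)
  have kp: "\<kappa> > 0" using k21 by (simp add: \<kappa>_def)
  define A :: "real^'v^('n option)" where "A = (\<chi> m i. case m of None \<Rightarrow> 1 | Some m' \<Rightarrow> q i $ m')"
  have "rank A \<le> CARD('n option)" using rank_bound[of A] by simp
  then have "rank A \<noteq> CARD('v)" using card card_option_UNIV by simp
  then obtain w where w0: "w \<noteq> 0" and Aw: "A *v w = 0"
    using matrix_nonfull_linear_equations_eq by blast
  have w1: "w \<bullet> vec 1 = 0"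
  proof -
    have "(A *v w) $ None = 0" using Aw by simp
    then show ?thesis by (simp add: A_def matrix_vector_mult_def vec1_inner one_inner mult.commute)
  qed
  have Lw: "L w = 0"
  proof -
    have "(L w) $ m = 0" for m
    proof -
      have "(A *v w) $ Some m = 0" using Aw by simp
      then show ?thesis by (simp add: A_def matrix_vector_mult_def L_def mult.commute)
    qed
    then show ?thesis by (simp add: vec_eq_iff)
  qed
  have Gw: "Gm *v w = 0"
  proof -
    have "(Gm *v w) $ i = q i \<bullet> L w" for i
      by (simp add: Gm_def matrix_vector_mult_def L_def inner_sum_right mult.commute)
    then show ?thesis using Lw by (simp add: vec_eq_iff)
  qed
  have Bw: "Bbar_mat E k *v w = 0"
    using w1 by (simp add: Beq matrix_vector_mult_diff_rdistrib scaleR_matrix_vector_assoc[symmetric] Gw J_mult)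
  have c1: "\<forall>w :: real^'v. w \<bullet> vec 1 = 0 \<longrightarrow> 0 \<le> w \<bullet> (Bbar_mat E k *v w)"
    using kp by (simp add: quadB)
  have c2: "\<exists>(w :: real^'v) \<gamma>. w \<noteq> 0 \<and> w \<bullet> vec 1 = 0 \<and> Bbar_mat E k *v w = \<gamma> *\<^sub>R vec 1"
    using w0 w1 Bw by (intro exI[of _ w] exI[of _ 0]) simp
  have c3: "det (Bbar_mat E k) = 0" by (rule det_zero_if_ker[OF Bw w0])
  have c4: "\<forall>r \<ge> rs. psd (r *\<^sub>R J_mat + Bbar_mat E k)"
  proof (intro allI impI)
    fix r assume r: "r \<ge> rs"
    have "transpose (r *\<^sub>R J_mat + Bbar_mat E k) = r *\<^sub>R J_mat + Bbar_mat E k"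
      by (simp add: transpose_add_scale J_sym Bbar_sym[OF G])
    moreover have "0 \<le> x \<bullet> ((r *\<^sub>R J_mat + Bbar_mat E k) *v x)" for x
    proof -
      have "x \<bullet> ((r *\<^sub>R J_mat + Bbar_mat E k) *v x) = (r - rs) * (x \<bullet> vec 1)^2 + \<kappa> * (norm (L x))^2"
        by (simp add: matrix_vector_mult_add_rdistrib scaleR_matrix_vector_assoc[symmetric]
            inner_add_right quadJ quadB algebra_simps)
      also have "\<dots> \<ge> 0" using r kp by simp
      finally show ?thesis .
    qed
    ultimately show "psd (r *\<^sub>R J_mat + Bbar_mat E k)" by (simp add: psd_def)
  qed
  show ?thesis using c1 c2 c3 c4 by blast
qed



lemma vec1_ne0: "(vec 1 :: real^'v::finite) \<noteq> 0"
  by (simp add: vec_eq_iff)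

lemma exists_u:
  fixes B :: "real^'v::finite^'v"
  assumes sym: "transpose B = B" and psdr: "psd (r *\<^sub>R J_mat + B)"
  shows "\<exists>u c. B *v u = c *\<^sub>R vec 1 \<and> u \<bullet> vec 1 = 1"
proof -
  obtain y z where y: "y \<in> span (range ((*v) B))"
    and z: "\<And>w. w \<in> span (range ((*v) B)) \<Longrightarrow> orthogonal z w" and yz: "vec 1 = y + z"
    by (rule orthogonal_subspace_decomp_exists[of "range ((*v) B)" "vec 1"]) blast
  have spanR: "span (range ((*v) B)) = range ((*v) B)"
    using linear_span_image[OF matrix_vector_mul_linear[of B], of UNIV] by simp
  have yR: "y \<in> range ((*v) B)" using y spanR by (simp only:)
  then obtain v where yv: "y = B *v v" by blast
  have "orthogonal z (B *v (B *v z))" by (rule z) (simp add: span_base)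
  then have "z \<bullet> (B *v (B *v z)) = 0" by (simp add: orthogonal_def)
  then have "(B *v z) \<bullet> (B *v z) = 0" using sym_inner[OF sym, of z "B *v z"] by simp
  then have Bz: "B *v z = 0" by simp
  show ?thesis
  proof (cases "z = 0")
    case False
    have "orthogonal z y" by (rule z[OF y])
    then have "z \<bullet> y = 0" by (simp add: orthogonal_def)
    moreover have "z \<bullet> vec 1 = z \<bullet> y + z \<bullet> z" by (simp only: yz inner_add_right)
    ultimately have z1: "z \<bullet> vec 1 = z \<bullet> z" by simp
    have zz: "z \<bullet> z > 0" using False by simp
    show ?thesis
      apply (rule exI[of _ "(1 / (z \<bullet> z)) *\<^sub>R z"], rule exI[of _ 0])
      using Bz z1 zz by (simp add: matrix_vector_mult_scaleR)
  next
    case True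
    then have v1: "B *v v = vec 1" using yz yv by simp
    define t where "t = v \<bullet> vec 1"
    have "t \<noteq> 0"
    proof
      assume t0: "t = 0"
      let ?M = "r *\<^sub>R J_mat + B"
      have Mv: "?M *v v = vec 1"
        using t0 v1 unfolding t_def
        by (simp add: matrix_vector_mult_add_rdistrib scaleR_matrix_vector_assoc[symmetric] J_mult)
      have "v \<bullet> (?M *v v) = 0" using t0 unfolding Mv t_def by simp
      then have "?M *v v = 0" using psd_zero[of ?M v] psdr by (simp add: psd_def)
      then show False using Mv vec1_ne0 by simp
    qed
    show ?thesis
      apply (rule exI[of _ "(1 / t) *\<^sub>R v"], rule exI[of _ "1/t"])
      using v1 \<open>t \<noteq> 0\<close> unfolding t_def by (simp add: matrix_vector_mult_scaleR)
  qed
qed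

lemma span_elim:
  fixes q :: "'v::finite \<Rightarrow> real^'m::finite"
  assumes L0: "(\<Sum>i\<in>UNIV. v$i *\<^sub>R q i) = 0" and vb: "v$b \<noteq> 0" and bT: "b \<notin> T"
    and supp: "\<And>i. i \<notin> T \<Longrightarrow> i \<noteq> b \<Longrightarrow> v$i = 0"
  shows "q b \<in> span (q ` T)"
proof -
  have "(\<Sum>i\<in>UNIV. v$i *\<^sub>R q i) = v$b *\<^sub>R q b + (\<Sum>i\<in>UNIV - {b}. v$i *\<^sub>R q i)"
    by (simp add: sum.remove)
  also have "(\<Sum>i\<in>UNIV - {b}. v$i *\<^sub>R q i) = (\<Sum>i\<in>T. v$i *\<^sub>R q i)"
    by (rule sum.mono_neutral_right) (use bT supp in auto)
  finally have e: "v$b *\<^sub>R q b = - (\<Sum>i\<in>T. v$i *\<^sub>R q i)" using L0 by (simp add: eq_neg_iff_add_eq_0)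
  have "q b = (1 / v$b) *\<^sub>R (v$b *\<^sub>R q b)" using vb by simp
  also have "\<dots> = (- 1 / v$b) *\<^sub>R (\<Sum>i\<in>T. v$i *\<^sub>R q i)" unfolding e by simp
  also have "\<dots> \<in> span (q ` T)"
    by (intro span_scale span_sum span_base) auto
  finally show ?thesis .
qed

lemma backward:
  fixes E :: "'v::finite \<Rightarrow> 'v \<Rightarrow> bool" and k :: real
  assumes G: "simple_graph E"
    and card: "CARD('v) = CARD('n::finite) + 2"
    and k1: "k > 1"
    and c1: "\<forall>w :: real^'v. w \<bullet> vec 1 = 0 \<longrightarrow> 0 \<le> w \<bullet> (Bbar_mat E k *v w)"
    and c2: "\<exists>(w :: real^'v) \<gamma>. w \<noteq> 0 \<and> w \<bullet> vec 1 = 0 \<and> Bbar_mat E k *v w = \<gamma> *\<^sub>R vec 1"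
    and c4: "\<exists>r0. \<forall>r \<ge> r0. psd (r *\<^sub>R J_mat + Bbar_mat E k)"
  shows "\<exists>p :: 'v \<Rightarrow> real^'n. spherical_representation E k p"
proof -
  define B where "B = Bbar_mat E k"
  have symB: "transpose B = B" using Bbar_sym[OF G] B_def by simp
  have irr: "\<And>x. \<not> E x x" using G unfolding simple_graph_def by blast
  have k21: "k^2 - 1 > 0" using k1 by (simp add: one_less_power)
  obtain r0 where "\<forall>r\<ge>r0. psd (r *\<^sub>R J_mat + B)" using c4 B_def by auto
  then have "psd (r0 *\<^sub>R J_mat + B)" by simp
  then obtain u c where Bu: "B *v u = c *\<^sub>R vec 1" and u1: "u \<bullet> vec 1 = 1"
    using exists_u[OF symB] by blast
  define M where "M = (-c) *\<^sub>R J_mat + B"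
  have symM: "transpose M = M" unfolding M_def by (simp only: transpose_add_scale J_sym symB)
  have Mv: "M *v x = B *v x - (c * (x \<bullet> vec 1)) *\<^sub>R vec 1" for x
    by (simp add: M_def matrix_vector_mult_add_rdistrib matrix_vector_mult_diff_rdistrib scaleR_matrix_vector_assoc[symmetric] J_mult)
  have Mu: "M *v u = 0" using Mv[of u] Bu u1 by simp
  have psdM: "0 \<le> x \<bullet> (M *v x)" for x
  proof -
    define t where "t = x \<bullet> vec 1"
    define y where "y = x - t *\<^sub>R u"
    have y1: "y \<bullet> vec 1 = 0" using u1 by (simp add: y_def t_def inner_diff_left)
    have My: "M *v y = M *v x" by (simp add: y_def matrix_vector_mult_diff_distrib matrix_vector_mult_scaleR Mu)
    have uMy: "u \<bullet> (M *v y) = 0" using sym_inner[OF symM, of u y] Mu by simp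
    have xy: "x = y + t *\<^sub>R u" by (simp add: y_def)
    have "x \<bullet> (M *v x) = (y + t *\<^sub>R u) \<bullet> (M *v y)" by (subst My) (simp only: xy[symmetric])
    also have "\<dots> = y \<bullet> (M *v y)" by (simp add: inner_add_left uMy)
    also have "\<dots> = y \<bullet> (B *v y)" using y1 by (simp add: Mv inner_diff_right)
    also have "\<dots> \<ge> 0" using c1 y1 B_def by simp
    finally show ?thesis .
  qed
  obtain w \<gamma> where w0: "w \<noteq> 0" and w1: "w \<bullet> vec 1 = 0" and Bw: "B *v w = \<gamma> *\<^sub>R vec 1"
    using c2 B_def by auto
  have Mw: "M *v w = \<gamma> *\<^sub>R vec 1" using Mv[of w] Bw w1 by simp
  have "w \<bullet> (M *v w) = 0" using w1 by (simp add: Mw)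
  then have Mw0: "M *v w = 0" using psd_zero[OF symM psdM] by blast
  then have "\<gamma> = 0" using Mw vec1_ne0 by simp
  then have Bw0: "B *v w = 0" using Bw by simp
  have Bent: "B$i$j = (if i = j then 1/(k^2-1) else if E i j then -1 else 0)" for i j
    unfolding B_def by (rule Bbar_entry[OF k1])
  have ex_edge: "\<exists>x y. E x y"
  proof (rule ccontr)
    assume "\<not> (\<exists>x y. E x y)"
    then have "B = (1/(k^2-1)) *\<^sub>R mat 1" by (simp add: vec_eq_iff Bent mat_def)
    then have "(1/(k^2-1)) *\<^sub>R w = 0" using Bw0 by (simp add: scaleR_matrix_vector_assoc[symmetric])
    then show False using w0 k21 by simp
  qed
  have ex_nonedge: "\<exists>x y. x \<noteq> y \<and> \<not> E x y"
  proof (rule ccontr)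
    assume "\<not> (\<exists>x y. x \<noteq> y \<and> \<not> E x y)"
    then have "B = (1/(k^2-1) + 1) *\<^sub>R mat 1 - J_mat" by (auto simp: vec_eq_iff Bent mat_def J_mat_def)
    then have "(1/(k^2-1) + 1) *\<^sub>R w = 0" using Bw0 w1
      by (simp add: scaleR_matrix_vector_assoc[symmetric] matrix_vector_mult_diff_rdistrib J_mult)
    moreover have "1/(k^2-1) + 1 > 0" using k21 by (simp add: add_pos_pos)
    ultimately show False using w0 by simp
  qed
  obtain x0 y0 where e0: "E x0 y0" using ex_edge by blast
  have xy0: "x0 \<noteq> y0" using e0 irr by blast
  obtain x1 y1 where xy1: "x1 \<noteq> y1" and ne1: "\<not> E x1 y1" using ex_nonedge by blast
  obtain q :: "'v \<Rightarrow> real^'v" where qM: "\<And>i j. q i \<bullet> q j = M$i$j"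
    using cholesky[OF symM psdM] by blast
  define L where "L = (\<lambda>x::real^'v. \<Sum>i\<in>UNIV. x$i *\<^sub>R q i)"
  have Lq: "x \<bullet> (M *v x) = (norm (L x))^2" for x unfolding L_def by (rule gram_quad) (simp add: qM)
  have Lu: "L u = 0" using Lq[of u] Mu by simp
  have Lw: "L w = 0" using Lq[of w] Mw0 by simp
  have Llin: "L (x - s *\<^sub>R y) = L x - s *\<^sub>R L y" for x y s
    by (simp add: L_def scaleR_left_diff_distrib sum_subtractf scaleR_sum_right)
  obtain a where ua: "u$a \<noteq> 0"
  proof -
    have "u \<noteq> 0" using u1 by auto
    then show ?thesis using that by (auto simp: vec_eq_iff)
  qed
  define w' where "w' = w - (w$a / u$a) *\<^sub>R u"
  have w'a: "w'$a = 0" using ua by (simp add: w'_def)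
  have Lw': "L w' = 0" using Lu Lw by (simp add: w'_def Llin)
  have w'0: "w' \<noteq> 0"
  proof
    assume "w' = 0"
    then have ww: "w = (w$a / u$a) *\<^sub>R u" by (simp add: w'_def)
    then have "w \<bullet> vec 1 = w$a / u$a" using u1 by (metis inner_scaleR_left mult.right_neutral)
    then have "w$a = 0" using w1 ua by simp
    then show False using ww w0 by simp
  qed
  obtain b where w'b: "w'$b \<noteq> 0" using w'0 by (auto simp: vec_eq_iff)
  have ab: "a \<noteq> b" using w'a w'b by auto
  define T where "T = UNIV - {a, b}"
  have qb: "q b \<in> span (q ` T)"
    by (rule span_elim[of w' q b T]) (use Lw' w'b w'a in \<open>auto simp: L_def T_def\<close>)
  have qa: "q a \<in> span (q ` (UNIV - {a}))"
    by (rule span_elim[of u q a]) (use Lu ua in \<open>auto simp: L_def\<close>)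
  have sub1: "q ` (UNIV - {a}) \<subseteq> span (q ` T)"
  proof
    fix z assume "z \<in> q ` (UNIV - {a})"
    then obtain i where i: "i \<noteq> a" "z = q i" by auto
    show "z \<in> span (q ` T)"
    proof (cases "i = b")
      case True then show ?thesis using qb i by simp
    next
      case False then have "i \<in> T" using i by (simp add: T_def)
      then show ?thesis using i by (simp add: span_base)
    qed
  qed
  then have "span (q ` (UNIV - {a})) \<subseteq> span (q ` T)"
    by (simp add: span_minimal)
  then have range_sub: "range q \<subseteq> span (q ` T)"
    using qa sub1 by (auto intro: span_base)
  define S where "S = span (range q)"
  have cardT: "card T = CARD('n)" using card ab by (simp add: T_def card_Diff_subset)
  have "dim S = dim (range q)" by (simp add: S_def)
  also have "\<dots> \<le> card (q ` T)" by (rule dim_le_card[OF range_sub]) simp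
  also have "\<dots> \<le> card T" by (rule card_image_le) simp
  finally have dimS: "dim S \<le> dim (UNIV :: (real^'n) set)" using cardT by simp
  obtain f :: "real^'v \<Rightarrow> real^'n" where flin: "linear f" and fnorm: "\<And>x. x \<in> S \<Longrightarrow> norm (f x) = norm x"
  proof -
    obtain f :: "real^'v \<Rightarrow> real^'n" where "linear f" "\<And>x. x \<in> span (range q) \<Longrightarrow> norm (f x) = norm x"
      using isometry_subset_subspace[OF subspace_span[of "range q"] subspace_UNIV dimS[unfolded S_def]]
      by blast
    then show ?thesis using that unfolding S_def by blast
  qed
  define p where "p = (\<lambda>i. f (q i))"
  have dpq: "dist (p i) (p j) = norm (q i - q j)" for i j
  proof -
    have "q i - q j \<in> S" by (simp add: S_def span_diff span_base)
    then show ?thesis by (simp add: p_def dist_norm linear_diff[OF flin, symmetric] fnorm)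
  qed
  have Ment: "M$i$j = -c + B$i$j" for i j by (simp add: M_def J_mat_def)
  define d where "d = k^2 - 1"
  have dp: "d > 0" using k21 d_def by simp
  have kd: "k^2 = d + 1" using d_def by simp
  have nqq: "(norm (q i - q j))^2 = (if i = j then 0 else if E i j then 2 * k^2 / d else 2 / d)" for i j
  proof -
    have "(norm (q i - q j))^2 = q i \<bullet> q i + q j \<bullet> q j - 2 * (q i \<bullet> q j)"
      by (simp add: power2_norm_eq_inner inner_diff_left inner_diff_right inner_commute)
    also have "\<dots> = 2 * B$i$i - 2 * B$i$j" using Bent[of j j] Bent[of i i] by (simp add: qM Ment)
    also have "\<dots> = (if i = j then 0 else if E i j then 2 * k^2 / d else 2 / d)"
      unfolding Bent d_def[symmetric] kd using dp by (simp add: field_simps)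
    finally show ?thesis .
  qed
  define a2 where "a2 = sqrt (2 / d)"
  have a2p: "a2 > 0" using dp by (simp add: a2_def)
  have dist_eq: "dist (p i) (p j) = (if E i j then k * a2 else a2)" if "i \<noteq> j" for i j
  proof -
    have "dist (p i) (p j) = sqrt ((norm (q i - q j))^2)" by (simp add: dpq)
    also have "\<dots> = (if E i j then sqrt (k^2 * (2/d)) else a2)" using that by (simp add: nqq a2_def)
    also have "\<dots> = (if E i j then k * a2 else a2)"
    proof -
      have "sqrt (k^2 * (2/d)) = sqrt (k^2) * a2" unfolding a2_def by (rule real_sqrt_mult)
      then have "sqrt (k^2 * (2/d)) = k * a2" using k1 by simp
      then show ?thesis by simp
    qed
    finally show ?thesis .
  qed
  have ka: "k * a2 > a2" using k1 a2p by simp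
  have nq_const: "norm (p i) = norm (p x1)" for i
  proof -
    have "norm (p i) = norm (q i)" for i by (simp add: p_def fnorm S_def span_base)
    moreover have "(norm (q i))^2 = (norm (q x1))^2"
      by (simp add: power2_norm_eq_inner qM Ment Bent)
    ultimately show ?thesis by (metis norm_ge_zero power2_eq_iff_nonneg)
  qed
  have rho: "norm (p x1) > 0"
  proof (rule ccontr)
    assume "\<not> norm (p x1) > 0"
    then have "\<And>i. p i = 0" using nq_const by (metis norm_eq_zero norm_ge_zero order_le_less)
    then have "dist (p x1) (p y1) = 0" by simp
    then show False using dist_eq[OF xy1] ne1 a2p by simp
  qed
  have "spherical_representation E k p"
    unfolding spherical_representation_def
  proof (intro conjI)
    show "inj p"
    proof (rule injI)
      fix x y :: 'v assume "p x = p y"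
      then have "dist (p x) (p y) = 0" by simp
      then show "x = y" using dist_eq[of x y] a2p ka by (cases "x = y") (auto split: if_splits)
    qed
    show "\<exists>a1 a2. {dist (p x) (p y) | x y. x \<noteq> y} = {a1, a2} \<and> a1 > a2 \<and> a1 / a2 = k \<and>
        (\<forall>x y. x \<noteq> y \<longrightarrow> (E x y \<longleftrightarrow> dist (p x) (p y) = a1))"
    proof (intro exI conjI allI impI)
      show "{dist (p x) (p y) | x y. x \<noteq> y} = {k * a2, a2}"
      proof
        show "{dist (p x) (p y) | x y. x \<noteq> y} \<subseteq> {k * a2, a2}" using dist_eq by auto
        have "k * a2 = dist (p x0) (p y0)" using dist_eq[OF xy0] e0 by simp
        moreover have "a2 = dist (p x1) (p y1)" using dist_eq[OF xy1] ne1 by simp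
        ultimately show "{k * a2, a2} \<subseteq> {dist (p x) (p y) | x y. x \<noteq> y}" using xy0 xy1 by blast
      qed
      show "k * a2 > a2" by (rule ka)
      show "k * a2 / a2 = k" using a2p by simp
      fix x y :: 'v assume "x \<noteq> y"
      then show "E x y \<longleftrightarrow> dist (p x) (p y) = k * a2" using dist_eq[of x y] ka by auto
    qed
    show "\<exists>c r. r > 0 \<and> (\<forall>x. dist (p x) c = r)"
      using rho nq_const by (intro exI[of _ 0] exI[of _ "norm (p x1)"]) simp
  qed
  then show ?thesis by blast
qed


theorem proposition4p1:
  fixes E :: "'v::finite \<Rightarrow> 'v \<Rightarrow> bool" and k :: real
  assumes "simple_graph E"
    and "CARD('v) = CARD('n::finite) + 2"
    and "k > 1"
  shows "(\<exists>p :: 'v \<Rightarrow> real^'n. spherical_representation E k p) \<longleftrightarrow>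
     ((\<forall>w :: real^'v. w \<bullet> vec 1 = 0 \<longrightarrow> 0 \<le> w \<bullet> (Bbar_mat E k *v w)) \<and>
      (\<exists>(w :: real^'v) \<gamma>. w \<noteq> 0 \<and> w \<bullet> vec 1 = 0 \<and> Bbar_mat E k *v w = \<gamma> *\<^sub>R vec 1) \<and>
      det (Bbar_mat E k) = 0 \<and>
      (\<exists>r0. \<forall>r \<ge> r0. psd (r *\<^sub>R J_mat + Bbar_mat E k)))"
proof
  assume "\<exists>p :: 'v \<Rightarrow> real^'n. spherical_representation E k p"
  then obtain p :: "'v \<Rightarrow> real^'n" where p: "spherical_representation E k p" by blast
  show "(\<forall>w :: real^'v. w \<bullet> vec 1 = 0 \<longrightarrow> 0 \<le> w \<bullet> (Bbar_mat E k *v w)) \<and>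
      (\<exists>(w :: real^'v) \<gamma>. w \<noteq> 0 \<and> w \<bullet> vec 1 = 0 \<and> Bbar_mat E k *v w = \<gamma> *\<^sub>R vec 1) \<and>
      det (Bbar_mat E k) = 0 \<and>
      (\<exists>r0. \<forall>r \<ge> r0. psd (r *\<^sub>R J_mat + Bbar_mat E k))"
    by (rule forward[OF assms p])
next
  assume H: "(\<forall>w :: real^'v. w \<bullet> vec 1 = 0 \<longrightarrow> 0 \<le> w \<bullet> (Bbar_mat E k *v w)) \<and>
      (\<exists>(w :: real^'v) \<gamma>. w \<noteq> 0 \<and> w \<bullet> vec 1 = 0 \<and> Bbar_mat E k *v w = \<gamma> *\<^sub>R vec 1) \<and>
      det (Bbar_mat E k) = 0 \<and>
      (\<exists>r0. \<forall>r \<ge> r0. psd (r *\<^sub>R J_mat + Bbar_mat E k))"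
  show "\<exists>p :: 'v \<Rightarrow> real^'n. spherical_representation E k p"
    by (rule backward[OF assms]) (use H in blast)+
qed

end
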